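(* Let $m\ge 3$. For every $\epsilon>0$ there exists $\delta>0$ such that for every polynomial $f(z)=z^{m}+\sum_{k=0}^{m-1}a_kz^k$ satisfying the $\delta$-condition and $|a_{0}|\ge 2^{\frac{1}{m-1}}+\epsilon$, one has $|a_{0}|-b(f)\ge\frac{\epsilon}{3}$; equivalently, $\{z\in\mathbb{C}: |z|\ge |a_0|-\tfrac{\epsilon}{3}\}\subseteq\Omega(f)$.
   Context: A monic polynomial $f(z)=z^{m}+\sum_{k=0}^{m-1}a_{k}z^{k}$ satisfies the $\delta$-condition if $|a_{k}|<\delta$ for all $1\le k\le m-1$ (no condition on $a_0$). $\Omega(f)=\{z\in\hat{\mathbb{C}}: f^{n}(z)\to\infty \text{ as } n\to+\infty\}$ ($f^n$ the $n$-th iterate), and $b(f)=\sup\{|z|: z\in\mathbb{C}\setminus\Omega(f)\}$. *)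

theory Defs
  imports "HOL-Analysis.Analysis"
begin

definition monic_poly :: "nat \<Rightarrow> (nat \<Rightarrow> complex) \<Rightarrow> complex \<Rightarrow> complex" where
  "monic_poly m a z = z ^ m + (\<Sum>k<m. a k * z ^ k)"

definition delta_condition :: "nat \<Rightarrow> real \<Rightarrow> (nat \<Rightarrow> complex) \<Rightarrow> bool" where
  "delta_condition m \<delta> a \<longleftrightarrow> (\<forall>k. 1 \<le> k \<and> k \<le> m - 1 \<longrightarrow> norm (a k) < \<delta>)"

text \<open>Finite part of the escaping set Omega(f): points whose orbit tends to infinity.\<close>
definition escape_set :: "(complex \<Rightarrow> complex) \<Rightarrow> complex set" where
  "escape_set f = {z. filterlim (\<lambda>n. (f ^^ n) z) at_infinity sequentially}"

definition escape_bound :: "(complex \<Rightarrow> complex) \<Rightarrow> real" where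
  "escape_bound f = (SUP z \<in> - escape_set f. norm z)"

end

theory Submission
  imports Defs "HOL-Computational_Algebra.Fundamental_Theorem_Algebra"
begin

lemma fixed_point_exists:
  assumes "m \<ge> 2"
  shows "\<exists>z. monic_poly m a z = z"
proof -
  define p :: "complex poly" where "p = monom 1 m + (\<Sum>k<m. monom (a k) k) - [:0,1:]"
  have ev: "poly p z = monic_poly m a z - z" for z
    by (simp add: p_def monic_poly_def poly_sum poly_monom)
  obtain k where k: "m = Suc (Suc k)" using assms by (metis add_2_eq_Suc le_Suc_ex)
  have "coeff p m = 1"
    using assms k by (simp add: p_def coeff_sum coeff_monom)
  hence "degree p \<ge> m" by (simp add: le_degree)
  hence "\<not> constant (poly p)" using assms constant_degree[of p] by simp
  then obtain z where "poly p z = 0" using fundamental_theorem_of_algebra by blast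
  thus ?thesis using ev by auto
qed

lemma escape_lemma:
  fixes f :: "complex \<Rightarrow> complex"
  assumes grow: "\<And>z. norm z \<ge> R \<Longrightarrow> norm (f z) \<ge> norm z + c"
    and c: "c > 0" and z: "norm z \<ge> R"
  shows "z \<in> escape_set f"
proof -
  have n: "norm ((f ^^ n) z) \<ge> norm z + real n * c" for n
  proof (induction n)
    case 0 then show ?case by simp
  next
    case (Suc n)
    have "norm ((f ^^ n) z) \<ge> R" using Suc c z
      by (smt (verit) of_nat_0_le_iff zero_le_mult_iff)
    hence "norm (f ((f ^^ n) z)) \<ge> norm ((f ^^ n) z) + c" by (rule grow)
    thus ?case using Suc by (simp add: algebra_simps)
  qed
  have "filterlim (\<lambda>n. norm z + real n * c) at_top sequentially"
    using c by real_asymp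
  hence "filterlim (\<lambda>n. norm ((f ^^ n) z)) at_top sequentially"
    by (rule filterlim_at_top_mono) (use n in auto)
  thus ?thesis unfolding escape_set_def filterlim_at_infinity_conv_norm_at_top by simp
qed

lemma pow_bound:
  fixes t s r :: real and n :: nat
  assumes "n \<ge> 1" "t \<ge> 1" "t ^ n = 2" "s \<ge> 0" "r \<ge> t + s"
  shows "r \<ge> 1 \<and> r ^ n \<ge> 2 + s"
proof -
  obtain k where k: "n = Suc k" using assms(1) by (cases n) auto
  have "t^k * s \<ge> s" using assms
    by (metis mult_le_cancel_right2 one_le_power order_refl mult_le_cancel_right1 mult_right_mono mult_1)
  hence "2 + s \<le> t^n + t^k * s" using assms by simp
  also have "\<dots> = t^k * (t + s)" using k by (simp add: algebra_simps)
  also have "\<dots> \<le> (t+s)^k * (t+s)"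
    using assms by (intro mult_right_mono power_mono) auto
  also have "\<dots> = (t + s) ^ n" using k by simp
  also have "\<dots> \<le> r ^ n" using assms by (intro power_mono) auto
  finally show ?thesis using assms by auto
qed

lemma norm_lower:
  assumes "m \<ge> 1" "delta_condition m \<delta> a" "norm z \<ge> 1"
  shows "norm (monic_poly m a z) \<ge> norm z ^ m - norm (a 0) - real (m - 1) * \<delta> * norm z ^ m"
proof -
  obtain k where k: "m = Suc k" using assms(1) by (cases m) auto
  have eq: "monic_poly m a z = z ^ m + a 0 + (\<Sum>j<k. a (Suc j) * z ^ Suc j)"
    unfolding monic_poly_def k sum.lessThan_Suc_shift by simp
  have "norm (\<Sum>j<k. a (Suc j) * z ^ Suc j) \<le> (\<Sum>j<k. norm (a (Suc j) * z ^ Suc j))"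
    by (rule norm_sum)
  also have "\<dots> \<le> (\<Sum>j<k. \<delta> * norm z ^ m)"
  proof (rule sum_mono)
    fix j assume j: "j \<in> {..<k}"
    have "norm (a (Suc j)) < \<delta>" using assms(2) j k unfolding delta_condition_def by auto
    moreover have "norm z ^ Suc j \<le> norm z ^ m" using j k assms(3)
      by (intro power_increasing) auto
    moreover have "\<delta> \<ge> 0" using \<open>norm (a (Suc j)) < \<delta>\<close> norm_ge_zero[of "a (Suc j)"] by linarith
    ultimately have "norm (a (Suc j)) * norm z ^ Suc j \<le> \<delta> * norm z ^ m"
      by (intro mult_mono) auto
    thus "norm (a (Suc j) * z ^ Suc j) \<le> \<delta> * norm z ^ m"
      by (simp add: norm_mult norm_power)
  qed
  also have "\<dots> = real (m - 1) * \<delta> * norm z ^ m" using k by simp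
  finally have S: "norm (\<Sum>j<k. a (Suc j) * z ^ Suc j) \<le> real (m - 1) * \<delta> * norm z ^ m" .
  have "norm (z ^ m) \<le> norm (monic_poly m a z) + norm (a 0) + norm (\<Sum>j<k. a (Suc j) * z ^ Suc j)"
  proof -
    have "z ^ m = monic_poly m a z - a 0 - (\<Sum>j<k. a (Suc j) * z ^ Suc j)"
      unfolding eq by simp
    hence "norm (z ^ m) \<le> norm (monic_poly m a z - a 0) + norm (\<Sum>j<k. a (Suc j) * z ^ Suc j)"
      by (metis norm_triangle_ineq4)
    moreover have "norm (monic_poly m a z - a 0) \<le> norm (monic_poly m a z) + norm (a 0)"
      by (rule norm_triangle_ineq4)
    ultimately show ?thesis by linarith
  qed
  thus ?thesis using S by (simp add: norm_power)
qed

theorem mainTheorem10: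
  fixes m :: nat
  assumes "m \<ge> 3"
  shows "\<forall>\<epsilon>>0. \<exists>\<delta>>0. \<forall>a :: nat \<Rightarrow> complex.
           delta_condition m \<delta> a \<and> norm (a 0) \<ge> 2 powr (1 / (real m - 1)) + \<epsilon>
           \<longrightarrow> norm (a 0) - escape_bound (monic_poly m a) \<ge> \<epsilon> / 3
             \<and> {z. norm z \<ge> norm (a 0) - \<epsilon> / 3} \<subseteq> escape_set (monic_poly m a)"
proof (intro allI impI)
  fix \<epsilon> :: real assume ep: "\<epsilon> > 0"
  define \<eta> where "\<eta> = \<epsilon> / (12 + 4 * \<epsilon>)"
  define \<delta> where "\<delta> = \<eta> / real (m - 1)"
  have m1: "real (m - 1) \<ge> 2" using assms by simp
  have eta_pos: "\<eta> > 0" and eta_lt: "\<eta> < 1" using ep by (auto simp: \<eta>_def field_simps)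
  have dpos: "\<delta> > 0" using eta_pos m1 by (simp add: \<delta>_def)
  have md: "real (m - 1) * \<delta> = \<eta>" using m1 by (simp add: \<delta>_def)
  have etaprod: "\<eta> * (2 + 2 * \<epsilon> / 3) = \<epsilon> / 6" using ep by (simp add: \<eta>_def field_simps)
  define t :: real where "t = 2 powr (1 / (real m - 1))"
  have t1: "t \<ge> 1" unfolding t_def using assms by (intro ge_one_powr_ge_zero) auto
  have t2: "t ^ (m - 1) = 2"
  proof -
    have "t ^ (m - 1) = t powr real (m - 1)" using t1 by (simp add: powr_realpow)
    also have "\<dots> = 2 powr (1 / (real m - 1) * real (m - 1))" unfolding t_def by (simp add: powr_powr)
    also have "1 / (real m - 1) * real (m - 1) = 1" using assms by (simp add: of_nat_diff)
    finally show ?thesis by simp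
  qed
  show "\<exists>\<delta>>0. \<forall>a :: nat \<Rightarrow> complex.
           delta_condition m \<delta> a \<and> norm (a 0) \<ge> 2 powr (1 / (real m - 1)) + \<epsilon>
           \<longrightarrow> norm (a 0) - escape_bound (monic_poly m a) \<ge> \<epsilon> / 3
             \<and> {z. norm z \<ge> norm (a 0) - \<epsilon> / 3} \<subseteq> escape_set (monic_poly m a)"
  proof (intro exI[of _ \<delta>] conjI allI impI dpos)
    fix a :: "nat \<Rightarrow> complex"
    assume H: "delta_condition m \<delta> a \<and> norm (a 0) \<ge> 2 powr (1 / (real m - 1)) + \<epsilon>"
    define A where "A = norm (a 0)"
    have A: "A \<ge> t + \<epsilon>" using H unfolding A_def t_def by simp
    have grow: "norm (monic_poly m a z) \<ge> norm z + \<epsilon> / 6" if z: "norm z \<ge> A - \<epsilon> / 3" for z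
    proof -
      define r where "r = norm z"
      have "r \<ge> t + 2 * \<epsilon> / 3" using z A unfolding r_def by simp
      from pow_bound[OF _ t1 t2 _ this] assms ep
      have r1: "r \<ge> 1" and X: "r ^ (m - 1) \<ge> 2 + 2 * \<epsilon> / 3" by auto
      have low: "norm (monic_poly m a z) \<ge> r ^ m - A - \<eta> * r ^ m"
        using norm_lower[of m \<delta> a z] H r1 assms md unfolding r_def A_def by simp
      have rm: "r ^ m = r * r ^ (m - 1)" using assms by (cases m) auto
      have "(1 - \<eta>) * r ^ (m - 1) \<ge> (1 - \<eta>) * (2 + 2 * \<epsilon> / 3)"
        using X eta_lt by (intro mult_left_mono) auto
      moreover have "(1 - \<eta>) * (2 + 2 * \<epsilon> / 3) = (2 + 2 * \<epsilon> / 3) - \<eta> * (2 + 2 * \<epsilon> / 3)"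
        by (simp add: left_diff_distrib)
      ultimately have Y: "(1 - \<eta>) * r ^ (m - 1) \<ge> 2 + \<epsilon> / 2" using etaprod by linarith
      have "r * ((1 - \<eta>) * r ^ (m - 1)) \<ge> r * (2 + \<epsilon> / 2)"
        using Y r1 by (intro mult_left_mono) auto
      moreover have "r * (2 + \<epsilon> / 2) \<ge> 2 * r + \<epsilon> / 2" using r1 ep
        by (simp add: algebra_simps)
      ultimately have "(1 - \<eta>) * r ^ m \<ge> 2 * r + \<epsilon> / 2" unfolding rm by (simp add: algebra_simps)
      thus ?thesis using low z unfolding r_def by (simp add: algebra_simps)
    qed
    have esc: "{z. norm z \<ge> A - \<epsilon> / 3} \<subseteq> escape_set (monic_poly m a)"
      using escape_lemma[OF grow] ep by auto
    then show "{z. norm z \<ge> norm (a 0) - \<epsilon> / 3} \<subseteq> escape_set (monic_poly m a)"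
      unfolding A_def .
    obtain w where w: "monic_poly m a w = w" using fixed_point_exists[of m a] assms by auto
    have "w \<notin> escape_set (monic_poly m a)"
    proof
      assume "w \<in> escape_set (monic_poly m a)"
      moreover have "((monic_poly m a) ^^ n) w = w" for n by (induction n) (auto simp: w)
      ultimately show False unfolding escape_set_def
        using not_tendsto_and_filterlim_at_infinity[of sequentially "\<lambda>n. w" w] by auto
    qed
    have "escape_bound (monic_poly m a) \<le> A - \<epsilon> / 3"
      unfolding escape_bound_def
    proof (rule cSUP_least)
      show "- escape_set (monic_poly m a) \<noteq> {}" using \<open>w \<notin> _\<close> by auto
      fix z assume "z \<in> - escape_set (monic_poly m a)"
      thus "norm z \<le> A - \<epsilon> / 3" using esc by force
    qed
    thus "norm (a 0) - escape_bound (monic_poly m a) \<ge> \<epsilon> / 3" unfolding A_def by simp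
  qed
qed

end
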